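(* Let $N\in\mathbb{N}$, $a_1,\dots,a_N\in\mathbb{C}\setminus\{0\}$, $z_1,\dots,z_N\in\mathbb{D}:=\{z\in\mathbb{C}:0<|z|<1\}$ pairwise distinct, and $\mathbf f=(f_k)_{k=0}^\infty$ with $f_k=\sum_{j=1}^N a_jz_j^k$. Let $\sigma_l$, $l\in\{0,\dots,N-1\}$, be a nonzero singular value of $\mathbf\Gamma_{\mathbf f}=(f_{k+j})_{k,j\ge0}$ of multiplicity one, and let $\mathbf v^{(l)}=(v^{(l)}_k)_{k\ge0}\in\ell^2\setminus\{0\}$ be a corresponding con-eigenvector, i.e. $\mathbf\Gamma_{\mathbf f}\overline{\mathbf v^{(l)}}=\sigma_l\mathbf v^{(l)}$. Then $$v^{(l)}_k=\frac{1}{\sigma_l}\sum_{j=1}^N a_j\,P_{\overline{\mathbf v^{(l)}}}(z_j)\,z_j^k,\qquad k\in\mathbb{N}_0,$$ where $P_{\overline{\mathbf v^{(l)}}}(z_j)=\overline{P_{\mathbf v^{(l)}}(\overline{z_j})}$, and the vector $\mathbf y=(y_r)_{r=1}^N:=(P_{\mathbf v^{(l)}}(\overline{z_r}))_{r=1}^N$ satisfies the finite con-eigenvalue system $$\sigma_l\,y_r=\sum_{j=1}^N\frac{a_j}{1-z_j\overline{z_r}}\,\overline{y_j},\qquad r=1,\dots,N.$$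
   Context: $\mathbf\Gamma_{\mathbf f}$ acts on $\ell^2(\mathbb{N}_0)$ by $(\mathbf\Gamma_{\mathbf f}\mathbf v)_k=\sum_{j\ge0}f_{k+j}v_j$. $\overline{\mathbf v}$ is the componentwise conjugate. For $\mathbf v\in\ell^2$, $P_{\mathbf v}(z)=\sum_{k\ge0}v_kz^k$ for $|z|<1$. *)

theory Defs
  imports "HOL-Analysis.Analysis"
begin

definition ell2 :: "(nat \<Rightarrow> complex) \<Rightarrow> bool" where
  "ell2 v \<longleftrightarrow> summable (\<lambda>k. (cmod (v k))^2)"

definition hankel_op :: "(nat \<Rightarrow> complex) \<Rightarrow> (nat \<Rightarrow> complex) \<Rightarrow> (nat \<Rightarrow> complex)" where
  "hankel_op f v = (\<lambda>k. \<Sum>j. f (k + j) * v j)"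

definition hankel_adj :: "(nat \<Rightarrow> complex) \<Rightarrow> (nat \<Rightarrow> complex) \<Rightarrow> (nat \<Rightarrow> complex)" where
  "hankel_adj f w = (\<lambda>k. \<Sum>j. cnj (f (j + k)) * w j)"

definition conj_seq :: "(nat \<Rightarrow> complex) \<Rightarrow> (nat \<Rightarrow> complex)" where
  "conj_seq v = (\<lambda>k. cnj (v k))"

definition gen_fun :: "(nat \<Rightarrow> complex) \<Rightarrow> complex \<Rightarrow> complex" where
  "gen_fun v z = (\<Sum>k. v k * z ^ k)"

text \<open>sigma > 0 is a singular value of Gamma_f of multiplicity one: sigma^2 is an
  eigenvalue of Gamma_f^* Gamma_f on l^2 whose eigenspace is one-dimensional.\<close>
definition simple_singular_value :: "(nat \<Rightarrow> complex) \<Rightarrow> real \<Rightarrow> bool" where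
  "simple_singular_value f \<sigma> \<longleftrightarrow> \<sigma> > 0 \<and>
     (\<exists>w0. ell2 w0 \<and> w0 \<noteq> (\<lambda>_. 0) \<and>
        hankel_adj f (hankel_op f w0) = (\<lambda>k. complex_of_real (\<sigma>^2) * w0 k) \<and>
        (\<forall>w. ell2 w \<and> hankel_adj f (hankel_op f w) = (\<lambda>k. complex_of_real (\<sigma>^2) * w k)
              \<longrightarrow> (\<exists>c. w = (\<lambda>k. c * w0 k))))"

end

theory Submission
  imports Defs
begin

lemma bdd_summ:
  fixes u :: "nat \<Rightarrow> complex"
  assumes "\<And>k. cmod (u k) \<le> B" "cmod w < 1"
  shows "summable (\<lambda>k. u k * w ^ k)"
proof (rule summable_comparison_test[where g="\<lambda>k. B * cmod w ^ k"])
  show "\<exists>N. \<forall>n\<ge>N. norm (u n * w ^ n) \<le> B * cmod w ^ n"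
    using assms by (auto simp: norm_mult norm_power intro!: mult_right_mono)
  show "summable (\<lambda>k. B * cmod w ^ k)" using assms(2) by (intro summable_mult) auto
qed

lemma cnj_suminf': "summable g \<Longrightarrow> cnj (suminf g) = (\<Sum>k. cnj (g k))"
  by (metis sums_cnj summable_sums sums_unique)

lemma ell2_bdd:
  assumes "ell2 v" obtains B where "\<And>k. cmod (v k) \<le> B"
proof -
  have "(\<lambda>k. (cmod (v k))^2) \<longlonglongrightarrow> 0" using assms unfolding ell2_def by (rule summable_LIMSEQ_zero)
  then have "Bseq (\<lambda>k. (cmod (v k))^2)" by (rule convergent_imp_Bseq[OF convergentI])
  then obtain K where K: "\<And>k. norm ((cmod (v k))^2) \<le> K" using BseqD by blast
  have "cmod (v k) \<le> 1 + K" for k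
  proof -
    have h0: "0 \<le> (cmod (v k) - 1)^2" by simp
    have "(cmod (v k) - 1)^2 = (cmod (v k))^2 - 2 * cmod (v k) + 1" by (simp add: power2_diff)
    with h0 have "cmod (v k) \<le> 1 + (cmod (v k))^2" using norm_ge_zero[of "v k"] by linarith
    then show ?thesis using K[of k] by simp
  qed
  then show ?thesis using that by blast
qed

theorem theorem3p2:
  fixes N :: nat and a z :: "nat \<Rightarrow> complex" and f v :: "nat \<Rightarrow> complex" and \<sigma> :: real
  assumes a_nz: "\<forall>j\<in>{1..N}. a j \<noteq> 0"
    and z_in: "\<forall>j\<in>{1..N}. 0 < cmod (z j) \<and> cmod (z j) < 1"
    and z_dist: "inj_on z {1..N}"
    and f_def: "f = (\<lambda>k. \<Sum>j=1..N. a j * z j ^ k)"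
    and sv: "simple_singular_value f \<sigma>"
    and v_l2: "ell2 v" and v_nz: "v \<noteq> (\<lambda>_. 0)"
    and coneig: "hankel_op f (conj_seq v) = (\<lambda>k. complex_of_real \<sigma> * v k)"
  shows "(\<forall>k. v k = (1 / complex_of_real \<sigma>) *
                 (\<Sum>j=1..N. a j * gen_fun (conj_seq v) (z j) * z j ^ k))
       \<and> (\<forall>j\<in>{1..N}. gen_fun (conj_seq v) (z j) = cnj (gen_fun v (cnj (z j))))
       \<and> (\<forall>r\<in>{1..N}. complex_of_real \<sigma> * gen_fun v (cnj (z r)) =
             (\<Sum>j=1..N. a j / (1 - z j * cnj (z r)) * cnj (gen_fun v (cnj (z j)))))"
proof -
  have spos: "\<sigma> > 0" using sv unfolding simple_singular_value_def by auto
  obtain B where B: "\<And>k. cmod (v k) \<le> B" using ell2_bdd[OF v_l2] by blast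
  have Bc: "\<And>k. cmod (conj_seq v k) \<le> B" using B by (simp add: conj_seq_def)
  define P where "P j = gen_fun (conj_seq v) (z j)" for j
  have summ: "summable (\<lambda>k. conj_seq v k * z j ^ k)" if "j \<in> {1..N}" for j
    using bdd_summ[OF Bc] z_in that by auto
  have H: "complex_of_real \<sigma> * v k = (\<Sum>j=1..N. a j * P j * z j ^ k)" for k
  proof -
    have "complex_of_real \<sigma> * v k = (\<Sum>i. f (k + i) * conj_seq v i)"
      using fun_cong[OF coneig, of k] by (simp add: hankel_op_def)
    also have "\<dots> = (\<Sum>i. \<Sum>j=1..N. (a j * z j ^ k) * (conj_seq v i * z j ^ i))"
      by (simp add: f_def sum_distrib_left power_add mult_ac)
    also have "\<dots> = (\<Sum>j=1..N. \<Sum>i. (a j * z j ^ k) * (conj_seq v i * z j ^ i))"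
      by (rule suminf_sum) (intro summable_mult summ)
    also have "\<dots> = (\<Sum>j=1..N. a j * P j * z j ^ k)"
    proof (intro sum.cong refl)
      fix j assume j: "j \<in> {1..N}"
      show "(\<Sum>i. (a j * z j ^ k) * (conj_seq v i * z j ^ i)) = a j * P j * z j ^ k"
        by (subst suminf_mult[OF summ[OF j]]) (simp add: P_def gen_fun_def mult_ac)
    qed
    finally show ?thesis .
  qed
  have V: "v k = (1 / complex_of_real \<sigma>) * (\<Sum>j=1..N. a j * P j * z j ^ k)" for k
    using H[of k] spos by (simp add: field_simps)
  have P2: "P j = cnj (gen_fun v (cnj (z j)))" if "j \<in> {1..N}" for j
  proof -
    have "summable (\<lambda>k. v k * cnj (z j) ^ k)" using bdd_summ[OF B] z_in that by auto
    then show ?thesis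
      by (simp add: cnj_suminf' P_def gen_fun_def conj_seq_def)
  qed
  have P3: "complex_of_real \<sigma> * gen_fun v (cnj (z r)) =
             (\<Sum>j=1..N. a j / (1 - z j * cnj (z r)) * P j)" if r: "r \<in> {1..N}" for r
  proof -
    have g: "summable (\<lambda>k. (z j * cnj (z r)) ^ k)" if "j \<in> {1..N}" for j
    proof -
      have "cmod (z j * cnj (z r)) < 1" using z_in that r
      proof -
        have "cmod (z j) * cmod (z r) < 1 * 1"
          using z_in that r by (intro mult_strict_mono') auto
        then show ?thesis by (simp add: norm_mult)
      qed
      then show ?thesis by simp
    qed
    have "complex_of_real \<sigma> * gen_fun v (cnj (z r)) = (\<Sum>k. complex_of_real \<sigma> * v k * cnj (z r) ^ k)"
    proof -
      have sm: "summable (\<lambda>k. v k * cnj (z r) ^ k)" using bdd_summ[OF B, of "cnj (z r)"] z_in r by auto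
      show ?thesis unfolding gen_fun_def
        by (subst suminf_mult[OF sm, symmetric]) (simp add: mult.assoc)
    qed
    also have "\<dots> = (\<Sum>k. \<Sum>j=1..N. (a j * P j) * (z j * cnj (z r)) ^ k)"
    proof (rule suminf_cong)
      fix k
      have "complex_of_real \<sigma> * v k * cnj (z r) ^ k = (\<Sum>j=1..N. a j * P j * z j ^ k) * cnj (z r) ^ k"
        by (simp only: H)
      also have "\<dots> = (\<Sum>j=1..N. a j * P j * z j ^ k * cnj (z r) ^ k)"
        by (rule sum_distrib_right)
      also have "\<dots> = (\<Sum>j=1..N. (a j * P j) * (z j * cnj (z r)) ^ k)"
        by (simp only: power_mult_distrib mult.assoc)
      finally show "complex_of_real \<sigma> * v k * cnj (z r) ^ k = (\<Sum>j=1..N. (a j * P j) * (z j * cnj (z r)) ^ k)" .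
    qed
    also have "\<dots> = (\<Sum>j=1..N. \<Sum>k. (a j * P j) * (z j * cnj (z r)) ^ k)"
      by (rule suminf_sum) (intro summable_mult g)
    also have "\<dots> = (\<Sum>j=1..N. a j / (1 - z j * cnj (z r)) * P j)"
    proof (intro sum.cong refl)
      fix j assume j: "j \<in> {1..N}"
      have "cmod (z j * cnj (z r)) < 1" using g[OF j] by simp
      then show "(\<Sum>k. (a j * P j) * (z j * cnj (z r)) ^ k) = a j / (1 - z j * cnj (z r)) * P j"
        using g[OF j] by (simp add: suminf_mult suminf_geometric)
    qed
    finally show ?thesis .
  qed
  show ?thesis using V P2 P3 unfolding P_def by (auto intro: sum.cong)
qed

end
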